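(* Let $P$ be an online minimization problem and $p^r$ an $r$-round input distribution with associated round cost functions $\mathrm{cost}_i$. Assume there are constants $t,s\geq0$ such that for every deterministic $P$-algorithm $D$ without advice, every $i$ and every history $w\in\mathcal{W}_i$, $$\mathbb{E}[\mathrm{cost}_i(D)\mid W_i=w]\geq t,\qquad \mathbb{E}[(\mathrm{cost}_i(D)-t)^2\mid W_i=w]\leq s^2.$$ Then for every algorithm $\mathrm{ALG}$ reading at most $b$ bits of advice and every $\varepsilon>0$, $$\Pr\big[\mathrm{cost}(\mathrm{ALG})\leq (t-\varepsilon)r\big]\leq 2^{\,b-K_{\gamma/(1+\gamma)}\left(\frac{\alpha+\gamma}{1+\gamma}\right)r},$$ where $\gamma=s^2/t^2$ and $\alpha=\varepsilon/t$.
   Context: For $P$-inputs $\sigma_1,\dots,\sigma_r$, $\sigma_1\cdots\sigma_r$ is the input with the initial state of $\sigma_1$ and all requests concatenated. An $r$-round input distribution: finite sets $I_1,\dots,I_r$ of $P$-inputs such that each $\sigma_1\cdots\sigma_r$ ($\sigma_i\in I_i$) is valid; round cost functions $\mathrm{cost}_i$ mapping an output for such an input to a non-negative real; distributions $p_i$ on $I_i$ and product distribution $p^r$. With the input drawn from $p^r$: $X_i$ is the round-$i$ part; $\mathrm{cost}_i(\cdot)$ the round-$i$ cost of the algorithm's output and $\mathrm{cost}(\cdot)=\sum_i\mathrm{cost}_i(\cdot)$; for an algorithm without advice, $W_i=(X_1,\dots,X_{i-1})$ (the history), and $\mathcal{W}_i$ its set of values of positive probability. The probability in the conclusion is over the input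 drawn from $p^r$. $K_y(x)=x\log_2(x/y)+(1-x)\log_2((1-x)/(1-y))$ for $0<y<1$, $x\in[0,1]$ (with $0\log 0=0$).
   Formalization: Each round cost $\mathrm{cost}_i$ depends only on the input of the first i rounds, $\sigma_1\cdots\sigma_i$, and the algorithm's output on it, not on the whole input $\sigma_1\cdots\sigma_r$ and its output. The statement above fails without it. *)

theory Defs
  imports "HOL-Probability.Probability"
begin

text \<open>A P-input is a pair (initial state, list of requests).  A deterministic online
algorithm without advice is a function D such that the answer to the j-th request of
input (s, qs) is D s (take (Suc j) qs): it depends only on the initial state and the
requests revealed so far.\<close>

definition out :: "('s \<Rightarrow> 'q list \<Rightarrow> 'o) \<Rightarrow> ('s \<times> 'q list) \<Rightarrow> 'o list" where
  "out D \<sigma> = map (\<lambda>j. D (fst \<sigma>) (take (Suc j) (snd \<sigma>))) [0..<length (snd \<sigma>)]"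

definition cat_rounds :: "(nat \<Rightarrow> 's \<times> 'q list) \<Rightarrow> nat \<Rightarrow> 's \<times> 'q list" where
  "cat_rounds x k = (fst (x 0), concat (map (\<lambda>i. snd (x i)) [0..<k]))"

text \<open>Round-i cost (rounds numbered 0..r-1) of the output of D on the input x: the round
cost function c i is applied to the input of rounds 0..i and the (online) output on it.\<close>

definition round_cost ::
  "(nat \<Rightarrow> ('s \<times> 'q list) \<Rightarrow> 'o list \<Rightarrow> real) \<Rightarrow> ('s \<Rightarrow> 'q list \<Rightarrow> 'o)
     \<Rightarrow> (nat \<Rightarrow> 's \<times> 'q list) \<Rightarrow> nat \<Rightarrow> real" where
  "round_cost c D x i = c i (cat_rounds x (Suc i)) (out D (cat_rounds x (Suc i)))"

definition input_dist :: "nat \<Rightarrow> (nat \<Rightarrow> ('s \<times> 'q list) pmf) \<Rightarrow> (nat \<Rightarrow> 's \<times> 'q list) pmf" where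
  "input_dist r p = Pi_pmf {..<r} undefined p"

definition K :: "real \<Rightarrow> real \<Rightarrow> real" where
  "K y x = (if x = 0 then 0 else x * log 2 (x / y))
         + (if x = 1 then 0 else (1 - x) * log 2 ((1 - x) / (1 - y)))"

end

theory Submission
  imports Defs
begin

lemma exp_parab:
  fixes L v :: real assumes L: "L \<ge> 0" and v: "v \<ge> 0"
  shows "exp (-L * v) \<le> 1 - (1 - exp(-L)) * (2 * v - v^2) + L * exp(-L) * (v - v^2)"
proof -
  define F where "F = (\<lambda>l::real. 1 - (1 - exp(-l)) * (2 * v - v^2) + l * exp(-l) * (v - v^2) - exp (-l * v))"
  have "F 0 \<le> F L"
  proof (rule DERIV_nonneg_imp_increasing_open[OF L])
    fix l :: real assume l: "0 < l" "l < L"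
    have d: "(F has_real_derivative (-exp(-l) * (2 * v - v^2) + (exp(-l) - l * exp(-l)) * (v - v^2) + v * exp(-l * v))) (at l)"
      unfolding F_def by (rule derivative_eq_intros refl | simp)+
    have e: "exp (-l * v) = exp(-l) * exp (l * (1-v))" by (simp add: exp_add[symmetric] algebra_simps)
    have "exp (l * (1-v)) \<ge> 1 + l * (1-v)" by (rule exp_ge_add_one_self)
    hence "exp(-l) * exp (l * (1-v)) \<ge> exp(-l) * (1 + l * (1-v))" by (intro mult_left_mono) auto
    hence "v * (exp (-l * v) - exp(-l) * (1 + l * (1-v))) \<ge> 0" using v e by simp
    moreover have "-exp(-l) * (2 * v - v^2) + (exp(-l) - l * exp(-l)) * (v - v^2) + v * exp(-l * v)
        = v * (exp (-l * v) - exp(-l) * (1 + l * (1-v)))" by (simp add: algebra_simps power2_eq_square)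
    ultimately show "\<exists>y. (F has_real_derivative y) (at l) \<and> 0 \<le> y" using d by auto
  next
    show "continuous_on {0..L} F" unfolding F_def by (intro continuous_intros)
  qed
  moreover have "F 0 = 0" by (simp add: F_def)
  ultimately show ?thesis by (simp add: F_def)
qed

lemma round_bound:
  fixes N :: "'a pmf" and Y :: "'a \<Rightarrow> real" and t s L :: real
  assumes fin: "finite (set_pmf N)" and Y0: "\<And>x. x \<in> set_pmf N \<Longrightarrow> Y x \<ge> 0"
   and m: "measure_pmf.expectation N Y \<ge> t"
   and var: "measure_pmf.expectation N (\<lambda>x. (Y x - t)^2) \<le> s^2"
   and t: "t > 0" and s: "s > 0" and L: "L \<ge> 0"
  shows "measure_pmf.expectation N (\<lambda>x. exp(-L * (Y x / (t * (1 + s^2/t^2)))))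
     \<le> (s^2/t^2)/(1 + s^2/t^2) + (1 - (s^2/t^2)/(1 + s^2/t^2)) * exp(-L)"
proof -
  define g where "g = s^2/t^2"
  define q where "q = g / (1 + g)"
  define M where "M = t * (1 + g)"
  define u where "u = exp (-L)"
  define B where "B = 2 * (u - 1) + L * u"
  define C where "C = 1 - u - L * u"
  define a0 where "a0 = 1 + B * (1-q) + C * (1-q)^2"
  define a1 where "a1 = (B + 2 * C * (1-q)) / M"
  define c where "c = C / M^2"
  have g0: "g > 0" using s t by (simp add: g_def)
  have M0: "M > 0" using g0 t by (simp add: M_def)
  have tg: "t + g * t > 0" using g0 t by (simp add: add_pos_pos)
  have q1: "1 - q = t / M" using g0 t tg by (simp add: q_def M_def field_simps)
  have ts: "t^2 + s^2 > 0" using t by (simp add: add_pos_nonneg)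
  have Me: "M = (t^2 + s^2) / t" using t by (simp add: M_def g_def field_simps power2_eq_square)
  have qe: "q = s^2 / (t^2 + s^2)" using t ts by (simp add: q_def g_def field_simps power2_eq_square)
  have qe1: "1 - q = t^2 / (t^2 + s^2)" using ts t by (simp add: qe diff_divide_distrib[symmetric] add_divide_distrib[symmetric] field_simps)
  have qq: "s^2 / M^2 = q * (1 - q)"
    unfolding Me qe1 unfolding qe using t ts by (simp add: field_simps power2_eq_square)
  have C0: "C \<ge> 0"
  proof -
    have "exp L \<ge> 1 + L" by (rule exp_ge_add_one_self)
    hence "exp (-L) * exp L \<ge> exp(-L) * (1 + L)" by (intro mult_left_mono) auto
    moreover have "exp (-L) * exp L = 1" by (simp add: exp_add[symmetric])
    ultimately have "exp(-L) * (1 + L) \<le> 1" by linarith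
    thus ?thesis by (simp add: C_def u_def algebra_simps)
  qed
  have q0: "q \<ge> 0" using g0 by (simp add: q_def)
  have a1le: "a1 \<le> 0"
  proof -
    have "B + 2 * C * (1-q) = - L * u - 2 * C * q" by (simp add: B_def C_def algebra_simps)
    also have "\<dots> \<le> 0"
    proof -
      have "L * u \<ge> 0" using L by (simp add: u_def)
      moreover have "C * q \<ge> 0" using C0 q0 by simp
      ultimately show ?thesis by linarith
    qed
    finally show ?thesis using M0 by (simp add: a1_def divide_nonpos_pos)
  qed
  have c0: "c \<ge> 0" using C0 M0 by (simp add: c_def)
  have int: "\<And>f::'a \<Rightarrow> real. integrable N f" by (rule integrable_measure_pmf_finite[OF fin])
  have pw: "exp(-L * (Y x / M)) \<le> a0 + a1 * (Y x - t) + c * (Y x - t)^2" if x: "x \<in> set_pmf N" for x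
  proof -
    define V where "V = Y x / M"
    have V0: "V \<ge> 0" using Y0[OF x] M0 by (simp add: V_def)
    have "exp(-L * V) \<le> 1 - (1 - exp(-L)) * (2 * V - V^2) + L * exp(-L) * (V - V^2)"
      by (rule exp_parab[OF L V0])
    also have "\<dots> = 1 + B * V + C * V^2" by (simp add: B_def C_def u_def algebra_simps power2_eq_square)
    also have "\<dots> = a0 + a1 * (Y x - t) + c * (Y x - t)^2"
    proof -
      have V: "V = (1 - q) + (Y x - t) / M" using q1 M0 by (simp add: V_def field_simps)
      show ?thesis unfolding V a0_def a1_def c_def using M0
        by (simp add: field_simps power2_eq_square)
    qed
    finally show ?thesis by (simp add: V_def)
  qed
  have "measure_pmf.expectation N (\<lambda>x. exp(-L * (Y x / M)))
      \<le> measure_pmf.expectation N (\<lambda>x. a0 + a1 * (Y x - t) + c * (Y x - t)^2)"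
    by (intro integral_mono_AE int AE_pmfI pw)
  also have "\<dots> = a0 + a1 * (measure_pmf.expectation N Y - t) + c * measure_pmf.expectation N (\<lambda>x. (Y x - t)^2)"
    by (simp add: int integral_add integral_diff)
  also have "\<dots> \<le> a0 + 0 + c * s^2"
    using a1le m c0 var by (intro add_mono mult_left_mono mult_nonpos_nonneg) auto
  also have "\<dots> = q + (1 - q) * u"
  proof -
    have "c * s^2 = C * (s^2 / M^2)" by (simp add: c_def)
    hence "c * s^2 = C * q * (1-q)" using qq by simp
    thus ?thesis by (simp add: a0_def B_def C_def algebra_simps power2_eq_square)
  qed
  finally show ?thesis by (simp add: q_def g_def M_def u_def)
qed

lemma tower:
  fixes N :: "'a pmf" and f :: "'a \<Rightarrow> real" and \<kappa> :: "'a \<Rightarrow> 'b"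
  assumes fin: "finite (set_pmf N)"
  shows "measure_pmf.expectation N f =
    measure_pmf.expectation N (\<lambda>x. measure_pmf.expectation (cond_pmf N {y. \<kappa> y = \<kappa> x}) f)"
proof -
  define S where "S = set_pmf N"
  define P where "P = (\<lambda>x. measure_pmf.prob N {y. \<kappa> y = \<kappa> x})"
  have finS: "finite S" using fin by (simp add: S_def)
  have Ppos: "P x > 0" if "x \<in> S" for x
    unfolding P_def by (rule measure_pmf_posI) (use that in \<open>auto simp: S_def\<close>)
  have Psum: "P x = (\<Sum>y\<in>S. if \<kappa> y = \<kappa> x then pmf N y else 0)" for x
  proof -
    have "P x = measure_pmf.prob N ({y. \<kappa> y = \<kappa> x} \<inter> set_pmf N)"
      by (simp add: P_def measure_Int_set_pmf)
    also have "\<dots> = sum (pmf N) ({y. \<kappa> y = \<kappa> x} \<inter> S)"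
      using finS by (simp add: S_def measure_measure_pmf_finite)
    also have "\<dots> = (\<Sum>y\<in>S. if \<kappa> y = \<kappa> x then pmf N y else 0)"
      using finS by (simp add: sum.inter_restrict Int_commute)
    finally show ?thesis .
  qed
  have cond: "measure_pmf.expectation (cond_pmf N {y. \<kappa> y = \<kappa> x}) f
      = (\<Sum>y\<in>S. f y * (if \<kappa> y = \<kappa> x then pmf N y / P x else 0))" if x: "x \<in> S" for x
  proof -
    have ne: "set_pmf N \<inter> {y. \<kappa> y = \<kappa> x} \<noteq> {}" using x by (auto simp: S_def)
    have "measure_pmf.expectation (cond_pmf N {y. \<kappa> y = \<kappa> x}) f
        = (\<Sum>y\<in>S. f y * pmf (cond_pmf N {y. \<kappa> y = \<kappa> x}) y)"
      by (rule integral_measure_pmf_real[OF finS]) (auto simp: set_cond_pmf[OF ne] S_def)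
    also have "\<dots> = (\<Sum>y\<in>S. f y * (if \<kappa> y = \<kappa> x then pmf N y / P x else 0))"
      by (intro sum.cong refl) (simp add: pmf_cond[OF ne] P_def)
    finally show ?thesis .
  qed
  have "measure_pmf.expectation N (\<lambda>x. measure_pmf.expectation (cond_pmf N {y. \<kappa> y = \<kappa> x}) f)
      = (\<Sum>x\<in>S. measure_pmf.expectation (cond_pmf N {y. \<kappa> y = \<kappa> x}) f * pmf N x)"
    by (rule integral_measure_pmf_real[OF finS]) (auto simp: S_def)
  also have "\<dots> = (\<Sum>x\<in>S. \<Sum>y\<in>S. f y * (if \<kappa> y = \<kappa> x then pmf N y / P x else 0) * pmf N x)"
    by (intro sum.cong refl) (simp add: cond sum_distrib_right)
  also have "\<dots> = (\<Sum>y\<in>S. \<Sum>x\<in>S. f y * pmf N y * ((if \<kappa> x = \<kappa> y then pmf N x else 0) / P y))"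
    by (subst sum.swap) (intro sum.cong refl, auto simp: P_def)
  also have "\<dots> = (\<Sum>y\<in>S. f y * pmf N y * (P y / P y))"
    by (intro sum.cong refl) (simp add: sum_distrib_left[symmetric] sum_divide_distrib[symmetric] Psum)
  also have "\<dots> = (\<Sum>y\<in>S. f y * pmf N y)"
    by (intro sum.cong refl) (use Ppos in force)
  also have "\<dots> = measure_pmf.expectation N f"
    by (rule integral_measure_pmf_real[OF finS, symmetric]) (auto simp: S_def)
  finally show ?thesis ..
qed

lemma prod_bound:
  fixes N :: "(nat \<Rightarrow> 'a) pmf" and Z :: "nat \<Rightarrow> (nat \<Rightarrow> 'a) \<Rightarrow> real" and \<phi> :: real
  assumes fin: "finite (set_pmf N)"
   and loc: "\<And>i x y. (\<forall>j\<le>i. x j = y j) \<Longrightarrow> Z i x = Z i y"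
   and Z0: "\<And>i x. Z i x \<ge> 0" and phi0: "\<phi> \<ge> 0"
   and cb: "\<And>k x. k < r \<Longrightarrow> x \<in> set_pmf N \<Longrightarrow>
       measure_pmf.expectation (cond_pmf N {y. \<forall>j<k. y j = x j}) (Z k) \<le> \<phi>"
  shows "measure_pmf.expectation N (\<lambda>x. \<Prod>i<r. Z i x) \<le> \<phi>^r"
proof -
  have int: "\<And>f::_ \<Rightarrow> real. integrable N f" by (rule integrable_measure_pmf_finite[OF fin])
  have "k \<le> r \<Longrightarrow> measure_pmf.expectation N (\<lambda>x. \<Prod>i<k. Z i x) \<le> \<phi>^k" for k
  proof (induction k)
    case 0
    then show ?case by simp
  next
    case (Suc k)
    hence k: "k < r" by simp
    define \<kappa> where "\<kappa> = (\<lambda>x::nat \<Rightarrow> 'a. \<lambda>j. if j < k then x j else undefined)"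
    define F where "F = (\<lambda>x. \<Prod>i<k. Z i x)"
    have A: "{y. \<kappa> y = \<kappa> x} = {y. \<forall>j<k. y j = x j}" for x
      by (auto simp: \<kappa>_def fun_eq_iff)
    have F0: "F x \<ge> 0" for x unfolding F_def by (intro prod_nonneg) (simp add: Z0)
    have Fc: "F y = F x" if "\<forall>j<k. y j = x j" for x y
      unfolding F_def by (intro prod.cong refl loc) (use that in auto)
    have "measure_pmf.expectation N (\<lambda>x. \<Prod>i<Suc k. Z i x)
        = measure_pmf.expectation N (\<lambda>x. F x * Z k x)"
      by (simp add: F_def mult.commute)
    also have "\<dots> = measure_pmf.expectation N
        (\<lambda>x. measure_pmf.expectation (cond_pmf N {y. \<kappa> y = \<kappa> x}) (\<lambda>y. F y * Z k y))"
      by (rule tower[OF fin])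
    also have "\<dots> = measure_pmf.expectation N
        (\<lambda>x. F x * measure_pmf.expectation (cond_pmf N {y. \<forall>j<k. y j = x j}) (Z k))"
    proof (intro integral_cong_AE AE_pmfI)
      fix x assume x: "x \<in> set_pmf N"
      have ne: "set_pmf N \<inter> {y. \<forall>j<k. y j = x j} \<noteq> {}" using x by auto
      have "measure_pmf.expectation (cond_pmf N {y. \<forall>j<k. y j = x j}) (\<lambda>y. F y * Z k y)
          = measure_pmf.expectation (cond_pmf N {y. \<forall>j<k. y j = x j}) (\<lambda>y. F x * Z k y)"
        by (intro integral_cong_AE AE_pmfI) (auto simp: set_cond_pmf[OF ne] intro!: Fc)
      thus "measure_pmf.expectation (cond_pmf N {y. \<kappa> y = \<kappa> x}) (\<lambda>y. F y * Z k y)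
          = F x * measure_pmf.expectation (cond_pmf N {y. \<forall>j<k. y j = x j}) (Z k)"
        by (simp add: A)
    qed auto
    also have "\<dots> \<le> measure_pmf.expectation N (\<lambda>x. F x * \<phi>)"
      by (intro integral_mono_AE int AE_pmfI mult_left_mono cb k F0)
    also have "\<dots> = measure_pmf.expectation N F * \<phi>" by simp
    also have "\<dots> \<le> \<phi>^k * \<phi>"
      using Suc.IH k phi0 by (intro mult_right_mono) (auto simp: F_def)
    finally show ?case by (simp add: mult.commute)
  qed
  thus ?thesis by simp
qed

lemma two_powr_exp: "(2::real) powr y = exp (y * ln 2)" by (simp add: powr_def)

lemma opt:
  fixes q a P :: real and r :: nat
  assumes q0: "0 < q" and qa: "q < a" and a1: "a \<le> 1"
    and bnd: "\<And>L. L > 0 \<Longrightarrow> P \<le> (exp (L * (1 - a)) * (q + (1 - q) * exp (-L)))^r"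
  shows "P \<le> 2 powr (- K q a * real r)"
proof (cases "a = 1")
  case True
  have lim: "((\<lambda>L. (exp (L * (1 - a)) * (q + (1 - q) * exp (-L)))^r) \<longlongrightarrow> (1 * (q + (1-q) * 0))^r) at_top"
  proof -
    have e: "((\<lambda>L::real. exp (-L)) \<longlongrightarrow> 0) at_top"
      by (rule filterlim_compose[OF exp_at_bot filterlim_uminus_at_bot_at_top])
    have h: "((\<lambda>L. q + (1-q) * exp(-L)) \<longlongrightarrow> q + (1-q) * 0) at_top" by (intro tendsto_intros e)
    have "((\<lambda>L. (q + (1-q) * exp(-L))^r) \<longlongrightarrow> (q + (1-q) * 0)^r) at_top" by (rule tendsto_power[OF h])
    thus ?thesis using True by simp
  qed
  have "P \<le> (1 * (q + (1-q) * 0))^r"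
    by (rule tendsto_le[OF _ lim tendsto_const]) (auto intro: eventually_mono[OF eventually_gt_at_top[of 0]] bnd)
  also have "\<dots> = 2 powr (- K q a * real r)"
  proof -
    have "K q a = log 2 (1/q)" using True by (simp add: K_def)
    hence "- K q a * real r * ln 2 = real r * ln q" using q0 by (simp add: log_def ln_div)
    thus ?thesis using q0 by (simp add: two_powr_exp exp_of_nat_mult)
  qed
  finally show ?thesis .
next
  case False
  hence a1': "a < 1" using a1 by simp
  have a0: "a > 0" using q0 qa by simp
  define L where "L = ln ((1 - q) * a / (q * (1 - a)))"
  have pos: "(1 - q) * a / (q * (1 - a)) > 0" using q0 qa a1' by (intro divide_pos_pos mult_pos_pos) auto
  have gt1: "(1 - q) * a / (q * (1 - a)) > 1"
  proof -
    have "(1 - q) * a > q * (1 - a)" using qa by (simp add: algebra_simps)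
    thus ?thesis using q0 a1' by (simp add: field_simps)
  qed
  have L0: "L > 0" unfolding L_def using gt1 by simp
  have Le: "L = ln (1-q) + ln a - ln q - ln (1-a)"
    unfolding L_def using q0 qa a1' a0 by (simp add: ln_div ln_mult)
  have eL: "exp (-L) = q * (1 - a) / ((1 - q) * a)"
    unfolding L_def using pos by (simp add: exp_minus)
  have phi: "q + (1 - q) * exp (-L) = exp (ln q - ln a)"
  proof -
    have "q + (1 - q) * exp (-L) = q / a" unfolding eL using q0 qa a1' a0 by (simp add: field_simps)
    thus ?thesis using q0 a0 by (simp add: exp_diff)
  qed
  have "P \<le> (exp (L * (1 - a)) * (q + (1 - q) * exp (-L)))^r" by (rule bnd[OF L0])
  also have "\<dots> = exp (L * (1 - a) + ln q - ln a)^r" by (simp add: phi exp_add[symmetric] exp_diff)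
  also have "\<dots> = exp (real r * (L * (1 - a) + ln q - ln a))" by (simp add: exp_of_nat_mult)
  also have "\<dots> = 2 powr (- K q a * real r)"
  proof -
    have "K q a = a * log 2 (a / q) + (1 - a) * log 2 ((1 - a) / (1 - q))"
      using a0 a1' by (simp add: K_def)
    also have "\<dots> = (a * (ln a - ln q) + (1 - a) * (ln (1-a) - ln (1-q))) / ln 2"
      using a0 q0 qa a1' by (simp add: log_def ln_div field_simps)
    finally have "K q a * ln 2 = a * (ln a - ln q) + (1 - a) * (ln (1-a) - ln (1-q))"
      by simp
    hence Keq: "K q a * ln 2 = a * (ln a - ln q) + (1 - a) * (ln (1-a) - ln (1-q))" .
    have "- K q a * real r * ln 2 = real r * (- (K q a * ln 2))" by (simp add: algebra_simps)
    also have "\<dots> = real r * (- (a * (ln a - ln q) + (1 - a) * (ln (1-a) - ln (1-q))))"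
      by (simp only: Keq)
    also have "\<dots> = real r * (L * (1 - a) + ln q - ln a)"
      by (simp add: Le algebra_simps)
    finally have "- K q a * real r * ln 2 = real r * (L * (1 - a) + ln q - ln a)" .
    thus ?thesis by (simp add: two_powr_exp)
  qed
  finally show ?thesis .
qed

theorem theorem8:
  fixes valid :: "('s \<times> 'q list) \<Rightarrow> bool"
    and r :: nat
    and I :: "nat \<Rightarrow> ('s \<times> 'q list) set"
    and p :: "nat \<Rightarrow> ('s \<times> 'q list) pmf"
    and c :: "nat \<Rightarrow> ('s \<times> 'q list) \<Rightarrow> 'o list \<Rightarrow> real"
    and t s \<epsilon> :: real
    and b :: nat
    and ALG :: "bool list \<Rightarrow> 's \<Rightarrow> 'q list \<Rightarrow> 'o"
    and advice :: "('s \<times> 'q list) \<Rightarrow> bool list"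
  assumes fin: "\<And>i. i < r \<Longrightarrow> finite (I i)"
    and supp: "\<And>i. i < r \<Longrightarrow> set_pmf (p i) \<subseteq> I i"
    and valid: "\<And>x. (\<forall>i<r. x i \<in> I i) \<Longrightarrow> valid (cat_rounds x r)"
    and cost_nonneg: "\<And>i \<sigma> y. c i \<sigma> y \<ge> 0"
    and t_pos: "t > 0" and s_pos: "s > 0"
    and mean: "\<And>(D :: 's \<Rightarrow> 'q list \<Rightarrow> 'o) i w. i < r \<Longrightarrow>
        measure_pmf.prob (input_dist r p) {x. \<forall>j<i. x j = w j} > 0 \<Longrightarrow>
        measure_pmf.expectation (cond_pmf (input_dist r p) {x. \<forall>j<i. x j = w j})
          (\<lambda>x. round_cost c D x i) \<ge> t"
    and var: "\<And>(D :: 's \<Rightarrow> 'q list \<Rightarrow> 'o) i w. i < r \<Longrightarrow>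
        measure_pmf.prob (input_dist r p) {x. \<forall>j<i. x j = w j} > 0 \<Longrightarrow>
        measure_pmf.expectation (cond_pmf (input_dist r p) {x. \<forall>j<i. x j = w j})
          (\<lambda>x. (round_cost c D x i - t)\<^sup>2) \<le> s\<^sup>2"
    and advice_len: "\<And>\<sigma>. length (advice \<sigma>) = b"
    and eps_pos: "\<epsilon> > 0" and eps_le: "\<epsilon> \<le> t"
  shows "measure_pmf.prob (input_dist r p)
           {x. (\<Sum>i<r. round_cost c (ALG (advice (cat_rounds x r))) x i) \<le> (t - \<epsilon>) * real r}
         \<le> 2 powr (real b - K ((s\<^sup>2 / t\<^sup>2) / (1 + s\<^sup>2 / t\<^sup>2))
                               ((\<epsilon> / t + s\<^sup>2 / t\<^sup>2) / (1 + s\<^sup>2 / t\<^sup>2)) * real r)"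
  proof -
  define Mr where "Mr = input_dist r p"
  define g where "g = s^2/t^2"
  define q where "q = g/(1+g)"
  define a where "a = (\<epsilon>/t + g)/(1+g)"
  define Mt where "Mt = t * (1 + g)"
  have g0: "g > 0" using s_pos t_pos by (simp add: g_def)
  have Mt0: "Mt > 0" using g0 t_pos by (simp add: Mt_def add_pos_pos)
  have q0: "0 < q" using g0 by (simp add: q_def)
  have q1: "q < 1" using g0 by (simp add: q_def)
  have qa: "q < a" using g0 eps_pos t_pos by (simp add: q_def a_def divide_strict_right_mono add_pos_pos)
  have a1: "a \<le> 1" using g0 eps_le t_pos by (simp add: a_def add_pos_pos field_simps)
  have g1: "1 + g > 0" using g0 by simp
  have oma1: "1 - a = (1 - \<epsilon>/t)/(1+g)" using g1 by (simp add: a_def field_simps)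
  have oma2: "(t - \<epsilon>) / Mt = (1 - \<epsilon>/t)/(1+g)" using g1 t_pos by (simp add: Mt_def field_simps)
  have oma: "(t - \<epsilon>) / Mt = 1 - a" using oma1 oma2 by simp
  have finS: "finite (set_pmf Mr)"
  proof -
    have "set_pmf Mr \<subseteq> PiE_dflt {..<r} undefined (set_pmf \<circ> p)"
      unfolding Mr_def input_dist_def by (rule set_Pi_pmf_subset') simp
    moreover have "finite (PiE_dflt {..<r} undefined (set_pmf \<circ> p))"
      by (intro finite_PiE_dflt) (auto intro: finite_subset[OF supp fin])
    ultimately show ?thesis by (rule finite_subset)
  qed
  have loc: "round_cost c D x i = round_cost c D y i" if "\<forall>j\<le>i. x j = y j" for D x y i
  proof -
    have "cat_rounds x (Suc i) = cat_rounds y (Suc i)"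
    proof -
      have m: "map (\<lambda>j. snd (x j)) [0..<Suc i] = map (\<lambda>j. snd (y j)) [0..<Suc i]"
        by (rule map_cong) (use that in auto)
      have "x 0 = y 0" using that by auto
      thus ?thesis unfolding cat_rounds_def m by simp
    qed
    thus ?thesis by (simp add: round_cost_def)
  qed
  have detD: "measure_pmf.prob Mr {x. (\<Sum>i<r. round_cost c D x i) \<le> (t - \<epsilon>) * real r}
      \<le> 2 powr (- K q a * real r)" for D
  proof (rule opt[OF q0 qa a1])
    fix L :: real assume L: "L > 0"
    define Z where "Z = (\<lambda>i x. exp (-L * (round_cost c D x i / Mt)))"
    define \<phi> where "\<phi> = q + (1 - q) * exp (-L)"
    have EZ: "measure_pmf.expectation Mr (\<lambda>x. \<Prod>i<r. Z i x) \<le> \<phi>^r"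
    proof (rule prod_bound[OF finS])
      show "Z i x = Z i y" if "\<forall>j\<le>i. x j = y j" for i x y
        unfolding Z_def using loc[OF that] by simp
      show "0 \<le> Z i x" for i x by (simp add: Z_def)
      show "0 \<le> \<phi>" using q0 q1 by (simp add: \<phi>_def)
      fix k x assume k: "k < r" and x: "x \<in> set_pmf Mr"
      have ne: "set_pmf Mr \<inter> {y. \<forall>j<k. y j = x j} \<noteq> {}" using x by auto
      have pp: "measure_pmf.prob (input_dist r p) {y. \<forall>j<k. y j = x j} > 0"
        unfolding Mr_def[symmetric] by (rule measure_pmf_posI[OF x]) simp
      have "measure_pmf.expectation (cond_pmf Mr {y. \<forall>j<k. y j = x j})
           (\<lambda>y. exp (-L * (round_cost c D y k / (t * (1 + s^2/t^2)))))
         \<le> (s^2/t^2)/(1 + s^2/t^2) + (1 - (s^2/t^2)/(1 + s^2/t^2)) * exp(-L)"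
      proof (rule round_bound)
        show "finite (set_pmf (cond_pmf Mr {y. \<forall>j<k. y j = x j}))"
          using finS by (simp add: set_cond_pmf[OF ne])
        show "\<And>y. 0 \<le> round_cost c D y k" by (simp add: round_cost_def cost_nonneg)
        show "t \<le> measure_pmf.expectation (cond_pmf Mr {y. \<forall>j<k. y j = x j}) (\<lambda>y. round_cost c D y k)"
          using mean[OF k pp] by (simp add: Mr_def)
        show "measure_pmf.expectation (cond_pmf Mr {y. \<forall>j<k. y j = x j}) (\<lambda>y. (round_cost c D y k - t)^2) \<le> s^2"
          using var[OF k pp] by (simp add: Mr_def)
      qed (use t_pos s_pos L in auto)
      thus "measure_pmf.expectation (cond_pmf Mr {y. \<forall>j<k. y j = x j}) (Z k) \<le> \<phi>"
        by (simp add: Z_def \<phi>_def q_def g_def Mt_def)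
    qed
    have ch: "measure_pmf.prob Mr {x \<in> space Mr. (\<Sum>i<r. round_cost c D x i) \<le> (t - \<epsilon>) * real r}
        \<le> exp (L / Mt * ((t - \<epsilon>) * real r)) *
           (\<integral>x\<in>space Mr. exp (- (L / Mt) * (\<Sum>i<r. round_cost c D x i)) \<partial>Mr)"
      by (rule measure_pmf.Chernoff_ineq_le) (use L Mt0 finS in \<open>auto simp: set_integrable_def intro: integrable_measure_pmf_finite\<close>)
    have ie: "(\<integral>x\<in>space Mr. exp (- (L / Mt) * (\<Sum>i<r. round_cost c D x i)) \<partial>Mr)
        = measure_pmf.expectation Mr (\<lambda>x. \<Prod>i<r. Z i x)"
      by (simp add: set_lebesgue_integral_def Z_def exp_sum sum_distrib_left)
    have "measure_pmf.prob Mr {x. (\<Sum>i<r. round_cost c D x i) \<le> (t - \<epsilon>) * real r}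
        \<le> exp (L / Mt * ((t - \<epsilon>) * real r)) * \<phi>^r"
      using ch EZ unfolding ie by (auto intro: order.trans mult_left_mono)
    also have "exp (L / Mt * ((t - \<epsilon>) * real r)) = exp (L * (1 - a))^r"
    proof -
      have "L / Mt * ((t - \<epsilon>) * real r) = real r * (L * ((t - \<epsilon>) / Mt))" by simp
      thus ?thesis by (simp add: oma exp_of_nat_mult)
    qed
    finally show "measure_pmf.prob Mr {x. (\<Sum>i<r. round_cost c D x i) \<le> (t - \<epsilon>) * real r}
        \<le> (exp (L * (1 - a)) * (q + (1 - q) * exp (-L)))^r"
      by (simp add: \<phi>_def power_mult_distrib)
  qed
  define Adv where "Adv = {xs :: bool list. set xs \<subseteq> UNIV \<and> length xs = b}"
  define Ev where "Ev = (\<lambda>w. {x. (\<Sum>i<r. round_cost c (ALG w) x i) \<le> (t - \<epsilon>) * real r})"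
  have finA: "finite Adv" unfolding Adv_def by (rule finite_lists_length_eq) simp
  have cardA: "card Adv = 2^b" unfolding Adv_def by (subst card_lists_length_eq) simp_all
  have "measure_pmf.prob Mr {x. (\<Sum>i<r. round_cost c (ALG (advice (cat_rounds x r))) x i) \<le> (t - \<epsilon>) * real r}
      \<le> measure_pmf.prob Mr (\<Union>w\<in>Adv. Ev w)"
    by (rule measure_pmf.finite_measure_mono) (auto simp: Adv_def Ev_def intro!: exI[of _ "advice (cat_rounds _ r)"] advice_len)
  also have "\<dots> \<le> (\<Sum>w\<in>Adv. measure_pmf.prob Mr (Ev w))"
    by (rule measure_pmf.finite_measure_subadditive_finite[OF finA]) auto
  also have "\<dots> \<le> (\<Sum>w\<in>Adv. 2 powr (- K q a * real r))"
    unfolding Ev_def by (intro sum_mono detD)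
  also have "\<dots> = 2^b * 2 powr (- K q a * real r)" by (simp add: cardA)
  also have "\<dots> = 2 powr (real b - K q a * real r)"
    by (simp add: powr_add[symmetric] powr_realpow[symmetric])
  finally show ?thesis by (simp add: Mr_def q_def a_def g_def)
qed

end
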